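(* Let $\alpha\in(0,1]$, $\gamma\in(\tfrac12,1]$, $c>0$, and let $(r_n)_{n\ge0}$ satisfy $0\le r_n<1$ and $\lim_{n\to\infty}n^\gamma r_n=c$. Define $l_n=\prod_{k=0}^{n-1}\frac{1}{1-\alpha r_k}$ and $k_n(t)=\lfloor n+n^\gamma t\rfloor$ for $t\ge0$. Then, uniformly over compact subsets of $[0,+\infty)$, \[\lim_{n\to\infty}\frac{l_{k_n(t)}}{l_n}=\begin{cases}e^{c\alpha t}&\text{if }\tfrac12<\gamma<1,\\(1+t)^{c\alpha}&\text{if }\gamma=1\text{ and }2c\alpha>1.\end{cases}\] *)

theory Defs
  imports "HOL-Analysis.Analysis"
begin

end

theory Submission
  imports Defs
begin

lemma exp_diff_le: "\<bar>exp a - exp b\<bar> \<le> exp (max a b) * \<bar>a - b\<bar>" for a b :: real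
proof -
  have *: "exp x - exp y \<le> exp x * (x - y)" if "y \<le> x" for x y :: real
  proof -
    have "1 + (y - x) \<le> exp (y - x)" by (rule exp_ge_add_one_self)
    hence "exp x * (1 + (y - x)) \<le> exp x * exp (y - x)" by simp
    also have "\<dots> = exp y" by (simp add: exp_diff)
    finally show ?thesis by (simp add: algebra_simps)
  qed
  show ?thesis
  proof (cases "b \<le> a")
    case True thus ?thesis using *[OF True] by (simp add: max_def)
  next
    case False thus ?thesis using *[of a b] by (simp add: max_def abs_if)
  qed
qed

lemma ulim_exp:
  fixes f :: "nat \<Rightarrow> real \<Rightarrow> real"
  assumes U: "uniform_limit K f g F" and B: "\<And>t. t \<in> K \<Longrightarrow> g t \<le> B"
  shows "uniform_limit K (\<lambda>n t. exp (f n t)) (\<lambda>t. exp (g t)) F"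
proof (rule uniform_limitI)
  fix e :: real assume e: "e > 0"
  define d where "d = min 1 (e / (2 * exp (B + 1)))"
  have d: "d > 0" using e by (simp add: d_def)
  from uniform_limitD[OF U d] show "\<forall>\<^sub>F n in F. \<forall>t\<in>K. dist (exp (f n t)) (exp (g t)) < e"
  proof (rule eventually_mono)
    fix n assume H: "\<forall>t\<in>K. dist (f n t) (g t) < d"
    show "\<forall>t\<in>K. dist (exp (f n t)) (exp (g t)) < e"
    proof
      fix t assume t: "t \<in> K"
      have a: "\<bar>f n t - g t\<bar> < d" using H t by (simp add: dist_real_def)
      have "max (f n t) (g t) \<le> B + 1" using a B[OF t] by (auto simp: d_def)
      hence "exp (max (f n t) (g t)) \<le> exp (B + 1)" by simp
      hence "\<bar>exp (f n t) - exp (g t)\<bar> \<le> exp (B + 1) * d"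
        using exp_diff_le[of "f n t" "g t"] a
        by (meson abs_ge_zero exp_ge_zero less_imp_le mult_mono order.trans)
      also have "\<dots> \<le> exp (B+1) * (e / (2 * exp (B + 1)))"
        by (intro mult_left_mono) (auto simp: d_def)
      also have "\<dots> < e" using e by simp
      finally show "dist (exp (f n t)) (exp (g t)) < e" by (simp add: dist_real_def)
    qed
  qed
qed

lemma ln_step: fixes j :: real assumes "1 \<le> j"
  shows "1/(j+1) \<le> ln (j+1) - ln j" "ln (j+1) - ln j \<le> 1/j"
proof -
  have "ln (j+1) - ln j = ln ((j+1)/j)" using assms by (simp add: ln_div)
  also have "ln ((j+1)/j) = ln (1 + 1/j)" using assms by (simp add: field_simps)
  also have "\<dots> \<le> 1/j" using assms by (intro ln_add_one_self_le_self) auto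
  finally show "ln (j+1) - ln j \<le> 1/j" .
  have "ln (j / (j+1)) \<le> j/(j+1) - 1" using assms by (intro ln_le_minus_one) auto
  moreover have "ln (j / (j+1)) = ln j - ln (j+1)" using assms by (simp add: ln_div)
  moreover have "j/(j+1) - 1 = - (1/(j+1))" using assms by (simp add: field_simps)
  ultimately show "1/(j+1) \<le> ln (j+1) - ln j" by linarith
qed

lemma harm: fixes n m :: nat assumes "1 \<le> n"
  shows "0 \<le> (\<Sum>j\<in>{n..<n+m}. 1 / real j) - (ln (real (n+m)) - ln (real n))
       \<and> (\<Sum>j\<in>{n..<n+m}. 1 / real j) - (ln (real (n+m)) - ln (real n)) \<le> 1/real n - 1/real (n+m)"
proof (induction m)
  case 0 thus ?case by simp
next
  case (Suc m)
  have j: "1 \<le> real (n+m)" using assms by simp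
  note s = ln_step[OF j]
  have "(\<Sum>j\<in>{n..<n+Suc m}. 1 / real j) = (\<Sum>j\<in>{n..<n+m}. 1 / real j) + 1 / real (n+m)"
    by simp
  moreover have "real (n + Suc m) = real (n+m) + 1" by simp
  ultimately show ?case using Suc s by (simp only:) linarith
qed

lemma ln_lip: fixes u v :: real assumes "1 \<le> u" "1 \<le> v" shows "\<bar>ln u - ln v\<bar> \<le> \<bar>u - v\<bar>"
proof -
  have *: "ln x - ln y \<le> x - y" if "1 \<le> y" "y \<le> x" for x y :: real
  proof -
    have "ln (x/y) \<le> x/y - 1" using that by (intro ln_le_minus_one) auto
    moreover have "ln (x/y) = ln x - ln y" using that by (simp add: ln_div)
    moreover have "x/y - 1 \<le> x - y"
    proof -
      have "x/y - 1 = (x - y)/y" using that by (simp add: field_simps)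
      also have "\<dots> \<le> (x - y)/1" using that by (intro divide_left_mono) auto
      finally show ?thesis by simp
    qed
    ultimately show ?thesis by linarith
  qed
  show ?thesis using *[of v u] *[of u v] assms by (cases "v \<le> u") auto
qed

lemma core:
  fixes \<alpha> \<gamma> c T :: real and r :: "nat \<Rightarrow> real" and h :: "real \<Rightarrow> real" and \<beta> :: "nat \<Rightarrow> real"
  assumes \<alpha>: "0 < \<alpha>" and \<gamma>: "0 < \<gamma>" and c: "0 < c" and r0: "\<And>n. 0 \<le> r n"
    and lim: "(\<lambda>n. real n powr \<gamma> * r n) \<longlonglongrightarrow> c" and T: "0 < T"
    and hb: "\<beta> \<longlonglongrightarrow> 0"
    and hh: "eventually (\<lambda>n. \<forall>t\<in>{0..T}. \<bar>(\<Sum>j\<in>{n..<n + nat \<lfloor>real n powr \<gamma> * t\<rfloor>}. real j powr -\<gamma>) - h t\<bar> \<le> \<beta> n) sequentially"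
  shows "uniform_limit {0..T} (\<lambda>n t. \<Sum>j\<in>{n..<n + nat \<lfloor>real n powr \<gamma> * t\<rfloor>}. - ln (1 - \<alpha> * r j)) (\<lambda>t. \<alpha>*c*h t) sequentially"
proof (rule uniform_limitI)
  fix e :: real assume e: "e > 0"
  define \<delta> where "\<delta> = min 1 (e / (4*\<alpha>*T))"
  have \<delta>0: "0 < \<delta>" "\<delta> \<le> 1" using e \<alpha> T by (auto simp: \<delta>_def)
  have "\<alpha>*\<delta>*T \<le> \<alpha>*(e / (4*\<alpha>*T))*T" using \<alpha> T by (intro mult_right_mono mult_left_mono) (auto simp: \<delta>_def)
  also have "\<dots> = e/4" using \<alpha> T by (simp add: field_simps)
  finally have \<delta>1: "\<alpha>*\<delta>*T \<le> e/4" .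
  have E1: "eventually (\<lambda>n. \<forall>j\<ge>n. \<bar>real j powr \<gamma> * r j - c\<bar> < \<delta>) sequentially"
  proof -
    have "eventually (\<lambda>j. dist (real j powr \<gamma> * r j) c < \<delta>) sequentially"
      by (rule tendstoD[OF lim \<delta>0(1)])
    hence "eventually (\<lambda>n. \<forall>j\<ge>n. dist (real j powr \<gamma> * r j) c < \<delta>) sequentially"
      by (rule eventually_all_ge_at_top)
    thus ?thesis by (simp add: dist_real_def)
  qed
  have pw: "(\<lambda>n. real n powr -\<gamma>) \<longlonglongrightarrow> 0"
    by (rule tendsto_neg_powr) (use \<gamma> filterlim_real_sequentially in auto)
  have E2: "eventually (\<lambda>n. \<alpha>*(c+1)*real n powr -\<gamma> < 1/2) sequentially"
  proof -
    have "(\<lambda>n. \<alpha>*(c+1)*real n powr -\<gamma>) \<longlonglongrightarrow> \<alpha>*(c+1)*0"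
      by (intro tendsto_mult tendsto_const pw)
    thus ?thesis by (rule order_tendstoD(2)) simp
  qed
  have E3: "eventually (\<lambda>n. 2*\<alpha>^2*(c+1)^2*T*real n powr -\<gamma> < e/4) sequentially"
  proof -
    have "(\<lambda>n. 2*\<alpha>^2*(c+1)^2*T*real n powr -\<gamma>) \<longlonglongrightarrow> 2*\<alpha>^2*(c+1)^2*T*0"
      by (intro tendsto_mult tendsto_const pw)
    thus ?thesis by (rule order_tendstoD(2)) (use e in simp)
  qed
  have E4: "eventually (\<lambda>n. \<beta> n < e/(4*\<alpha>*c)) sequentially"
    by (rule order_tendstoD(2)[OF hb]) (use e \<alpha> c in simp)
  have E5: "eventually (\<lambda>n. 1 \<le> n) sequentially" by (rule eventually_ge_at_top)
  show "\<forall>\<^sub>F n in sequentially. \<forall>t\<in>{0..T}. dist (\<Sum>j\<in>{n..<n + nat \<lfloor>real n powr \<gamma> * t\<rfloor>}. - ln (1 - \<alpha> * r j)) (\<alpha>*c*h t) < e"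
    using E1 E2 E3 E4 E5 hh
  proof eventually_elim
    case (elim n)
    note A1 = elim(1) and A2 = elim(2) and A3 = elim(3) and A4 = elim(4) and A5 = elim(5) and A6 = elim(6)
    have n1: "1 \<le> real n" using A5 by simp
    have np: "real n powr \<gamma> * real n powr -\<gamma> = 1" using n1 by (simp add: powr_add[symmetric])
    have npg: "0 < real n powr -\<gamma>" using n1 by simp
    show ?case
    proof
      fix t assume t: "t \<in> {0..T}"
      define m where "m = nat \<lfloor>real n powr \<gamma> * t\<rfloor>"
      have "real m \<le> real n powr \<gamma> * t"
        using t n1 by (simp add: m_def)
      also have "\<dots> \<le> real n powr \<gamma> * T" using t by (intro mult_left_mono) auto
      finally have mle: "real m \<le> real n powr \<gamma> * T" .
      have mD: "real m * real n powr -\<gamma> \<le> T"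
      proof -
        have "real m * real n powr -\<gamma> \<le> real n powr \<gamma> * T * real n powr -\<gamma>"
          using mult_right_mono[OF mle less_imp_le[OF npg]] .
        also have "\<dots> = T * (real n powr \<gamma> * real n powr -\<gamma>)" by (simp add: algebra_simps)
        finally show ?thesis using np by simp
      qed
      define D where "D = 2*(\<alpha>*(c+1)*real n powr -\<gamma>)^2 + \<alpha>*\<delta>*real n powr -\<gamma>"
      have trm: "\<bar>- ln (1 - \<alpha> * r j) - \<alpha>*c*real j powr -\<gamma>\<bar> \<le> D" if j: "j \<in> {n..<n+m}" for j
      proof -
        have jn: "real n \<le> real j" using j by simp
        have j1: "1 \<le> real j" using jn n1 by simp
        have jp: "real j powr -\<gamma> \<le> real n powr -\<gamma>"
          by (rule powr_mono2') (use jn n1 \<gamma> in auto)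
        have jp0: "0 \<le> real j powr -\<gamma>" by simp
        have rj: "r j = (real j powr \<gamma> * r j) * real j powr -\<gamma>"
          using j1 by (simp add: mult.assoc powr_add[symmetric])
        define a where "a = real j powr \<gamma> * r j"
        have ad: "\<bar>a - c\<bar> < \<delta>" using A1 j by (auto simp: a_def)
        have a0: "0 \<le> a" using r0[of j] by (simp add: a_def)
        have ac: "a \<le> c + 1" using ad \<delta>0 by linarith
        define x where "x = \<alpha> * r j"
        have xa: "x = \<alpha> * a * real j powr -\<gamma>" using rj by (simp add: x_def a_def)
        have x0: "0 \<le> x" using \<alpha> r0[of j] by (simp add: x_def)
        have xle: "x \<le> \<alpha>*(c+1)*real n powr -\<gamma>"
          unfolding xa using \<alpha> a0 ac jp jp0
          by (intro mult_mono mult_left_mono) auto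
        have xh: "x \<le> 1/2" using xle A2 by linarith
        have l1: "- x - 2 * x\<^sup>2 \<le> ln (1 - x)" by (rule ln_one_minus_pos_lower_bound[OF x0 xh])
        have l2: "ln (1 - x) \<le> (1 - x) - 1" by (rule ln_le_minus_one) (use xh in auto)
        have x2: "x^2 \<le> (\<alpha>*(c+1)*real n powr -\<gamma>)^2" using x0 xle by (intro power_mono) auto
        have "x - \<alpha>*c*real j powr -\<gamma> = \<alpha> * (a - c) * real j powr -\<gamma>" unfolding xa by (simp add: algebra_simps)
        hence "\<bar>x - \<alpha>*c*real j powr -\<gamma>\<bar> = \<alpha> * \<bar>a - c\<bar> * real j powr -\<gamma>" using \<alpha> by (simp add: abs_mult)
        also have "\<dots> \<le> \<alpha> * \<delta> * real n powr -\<gamma>" using \<alpha> ad jp jp0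
          by (intro mult_mono mult_left_mono) auto
        finally have x3: "\<bar>x - \<alpha>*c*real j powr -\<gamma>\<bar> \<le> \<alpha> * \<delta> * real n powr -\<gamma>" .
        show ?thesis using l1 l2 x2 x3 unfolding D_def x_def[symmetric] by linarith
      qed
      have "\<bar>(\<Sum>j\<in>{n..<n+m}. - ln (1 - \<alpha> * r j)) - \<alpha>*c*(\<Sum>j\<in>{n..<n+m}. real j powr -\<gamma>)\<bar>
          = \<bar>\<Sum>j\<in>{n..<n+m}. (- ln (1 - \<alpha> * r j) - \<alpha>*c*real j powr -\<gamma>)\<bar>"
        by (simp add: sum_subtractf sum_distrib_left)
      also have "\<dots> \<le> (\<Sum>j\<in>{n..<n+m}. \<bar>- ln (1 - \<alpha> * r j) - \<alpha>*c*real j powr -\<gamma>\<bar>)"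
        by (rule sum_abs)
      also have "\<dots> \<le> real (card {n..<n+m}) * D" by (rule sum_bounded_above) (rule trm)
      also have "\<dots> = real m * D" by simp
      also have "\<dots> = 2*\<alpha>^2*(c+1)^2*(real m * real n powr -\<gamma>)*real n powr -\<gamma> + \<alpha>*\<delta>*(real m * real n powr -\<gamma>)"
        by (simp add: D_def power2_eq_square algebra_simps)
      also have "\<dots> \<le> 2*\<alpha>^2*(c+1)^2*T*real n powr -\<gamma> + \<alpha>*\<delta>*T"
        using mD npg \<alpha> \<delta>0
        by (intro add_mono mult_right_mono mult_left_mono) auto
      finally have P1: "\<bar>(\<Sum>j\<in>{n..<n+m}. - ln (1 - \<alpha> * r j)) - \<alpha>*c*(\<Sum>j\<in>{n..<n+m}. real j powr -\<gamma>)\<bar>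
          \<le> 2*\<alpha>^2*(c+1)^2*T*real n powr -\<gamma> + \<alpha>*\<delta>*T" .
      have hb': "\<bar>(\<Sum>j\<in>{n..<n+m}. real j powr -\<gamma>) - h t\<bar> \<le> \<beta> n" using A6 t by (simp add: m_def)
      have "\<bar>\<alpha>*c*(\<Sum>j\<in>{n..<n+m}. real j powr -\<gamma>) - \<alpha>*c*h t\<bar> = \<alpha>*c*\<bar>(\<Sum>j\<in>{n..<n+m}. real j powr -\<gamma>) - h t\<bar>"
        using \<alpha> c by (simp add: abs_mult right_diff_distrib[symmetric])
      also have "\<dots> \<le> \<alpha>*c*\<beta> n" using hb' \<alpha> c by simp
      also have "\<dots> < \<alpha>*c*(e/(4*\<alpha>*c))" using A4 \<alpha> c by (intro mult_strict_left_mono) auto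
      also have "\<dots> = e/4" using \<alpha> c by simp
      finally have P2: "\<bar>\<alpha>*c*(\<Sum>j\<in>{n..<n+m}. real j powr -\<gamma>) - \<alpha>*c*h t\<bar> < e/4" .
      have "\<bar>(\<Sum>j\<in>{n..<n+m}. - ln (1 - \<alpha> * r j)) - \<alpha>*c*h t\<bar> < e"
        using P1 P2 A3 \<delta>1 by linarith
      thus "dist (\<Sum>j\<in>{n..<n + nat \<lfloor>real n powr \<gamma> * t\<rfloor>}. - ln (1 - \<alpha> * r j)) (\<alpha>*c*h t) < e"
        by (simp add: m_def dist_real_def)
    qed
  qed
qed

lemma hh_lt1:
  fixes \<gamma> T :: real
  assumes \<gamma>: "0 < \<gamma>" "\<gamma> \<le> 1" and T: "0 < T"
  shows "eventually (\<lambda>n. \<forall>t\<in>{0..T}. \<bar>(\<Sum>j\<in>{n..<n + nat \<lfloor>real n powr \<gamma> * t\<rfloor>}. real j powr -\<gamma>) - t\<bar>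
            \<le> T^2 * real n powr (\<gamma> - 1) + real n powr -\<gamma>) sequentially"
  using eventually_ge_at_top[of "1::nat"]
proof eventually_elim
  case (elim n)
  have n1: "1 \<le> real n" using elim by simp
  have np: "real n powr \<gamma> * real n powr -\<gamma> = 1" using n1 by (simp add: powr_add[symmetric])
  have npg: "0 < real n powr -\<gamma>" using n1 by simp
  have npg': "0 < real n powr \<gamma>" using n1 by simp
  show ?case
  proof
    fix t assume t: "t \<in> {0..T}"
    define m where "m = nat \<lfloor>real n powr \<gamma> * t\<rfloor>"
    have y0: "0 \<le> real n powr \<gamma> * t" using t by simp
    have m1: "real m \<le> real n powr \<gamma> * t" using y0 by (simp add: m_def)
    have m2: "real n powr \<gamma> * t < real m + 1" using y0 by (simp add: m_def)
    have "real n powr \<gamma> * t \<le> real n powr \<gamma> * T" using t npg' by (intro mult_left_mono) auto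
    hence mle: "real m \<le> real n powr \<gamma> * T" using m1 by linarith
    have m0: "0 \<le> real m" by simp
    have trm: "0 \<le> real n powr -\<gamma> - real j powr -\<gamma> \<and> real n powr -\<gamma> - real j powr -\<gamma> \<le> real n powr -\<gamma> * real m / real n"
      if j: "j \<in> {n..<n+m}" for j
    proof -
      have jn: "real n \<le> real j" using j by simp
      have jm: "real j - real n \<le> real m" using j by simp
      have j1: "1 \<le> real j" using jn n1 by simp
      have A: "real j powr -\<gamma> \<le> real n powr -\<gamma>" by (rule powr_mono2') (use jn n1 \<gamma> in auto)
      have "real n powr (1 - \<gamma>) \<le> real j powr (1 - \<gamma>)" by (rule powr_mono2) (use jn n1 \<gamma> in auto)
      moreover have "real n powr (1 - \<gamma>) = real n * real n powr -\<gamma>"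
        using powr_add[of "real n" 1 "-\<gamma>"] n1 by simp
      moreover have "real j powr (1 - \<gamma>) = real j * real j powr -\<gamma>"
        using powr_add[of "real j" 1 "-\<gamma>"] j1 by simp
      ultimately have B: "real n * real n powr -\<gamma> \<le> real j * real j powr -\<gamma>" by simp
      have "real n powr -\<gamma> - real j powr -\<gamma> \<le> real n powr -\<gamma> - real n * real n powr -\<gamma> / real j"
        using B j1 by (simp add: field_simps)
      also have "\<dots> = real n powr -\<gamma> * ((real j - real n) / real j)" using j1 by (simp add: field_simps)
      also have "\<dots> \<le> real n powr -\<gamma> * (real m / real n)"
      proof (intro mult_left_mono)
        have "(real j - real n) * real n \<le> real m * real j"
          using jm jn n1 by (intro mult_mono) auto
        thus "(real j - real n) / real j \<le> real m / real n" using j1 n1 by (simp add: field_simps)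
      qed (use npg in auto)
      finally show ?thesis using A by simp
    qed
    have S1: "\<bar>(\<Sum>j\<in>{n..<n+m}. real j powr -\<gamma>) - real m * real n powr -\<gamma>\<bar>
        \<le> real m * (real n powr -\<gamma> * real m / real n)"
    proof -
      have "\<bar>(\<Sum>j\<in>{n..<n+m}. real j powr -\<gamma>) - real m * real n powr -\<gamma>\<bar>
          = \<bar>\<Sum>j\<in>{n..<n+m}. (real n powr -\<gamma> - real j powr -\<gamma>)\<bar>"
        by (simp add: sum_subtractf)
      also have "\<dots> = (\<Sum>j\<in>{n..<n+m}. (real n powr -\<gamma> - real j powr -\<gamma>))"
        using trm by (intro abs_of_nonneg sum_nonneg) auto
      also have "\<dots> \<le> real (card {n..<n+m}) * (real n powr -\<gamma> * real m / real n)"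
        by (rule sum_bounded_above) (use trm in auto)
      finally show ?thesis by simp
    qed
    have "real m * (real n powr -\<gamma> * real m / real n) = real m ^ 2 * real n powr -\<gamma> / real n"
      by (simp add: power2_eq_square)
    also have "\<dots> \<le> (real n powr \<gamma> * T) ^ 2 * real n powr -\<gamma> / real n"
      using mle m0 npg n1 by (intro divide_right_mono mult_right_mono power_mono) auto
    also have "\<dots> = T^2 * (real n powr \<gamma> * real n powr -\<gamma>) * real n powr \<gamma> / real n"
      by (simp add: power2_eq_square algebra_simps)
    also have "\<dots> = T^2 * real n powr (\<gamma> - 1)"
      using np n1 by (simp add: powr_diff powr_one)
    finally have S2: "real m * (real n powr -\<gamma> * real m / real n) \<le> T^2 * real n powr (\<gamma> - 1)" .
    have "t = real n powr \<gamma> * t * real n powr -\<gamma>" using np by (simp add: algebra_simps)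
    hence "real m * real n powr -\<gamma> - t = (real m - real n powr \<gamma> * t) * real n powr -\<gamma>"
      by (simp add: left_diff_distrib)
    hence "\<bar>real m * real n powr -\<gamma> - t\<bar> = \<bar>real m - real n powr \<gamma> * t\<bar> * real n powr -\<gamma>"
      using npg by (simp add: abs_mult)
    also have "\<dots> \<le> 1 * real n powr -\<gamma>" using m1 m2 npg by (intro mult_right_mono) auto
    finally have S3: "\<bar>real m * real n powr -\<gamma> - t\<bar> \<le> real n powr -\<gamma>" by simp
    show "\<bar>(\<Sum>j\<in>{n..<n + nat \<lfloor>real n powr \<gamma> * t\<rfloor>}. real j powr -\<gamma>) - t\<bar>
            \<le> T^2 * real n powr (\<gamma> - 1) + real n powr -\<gamma>"
      using S1 S2 S3 unfolding m_def[symmetric] by linarith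
  qed
qed

lemma hh_eq1:
  fixes \<gamma> T :: real
  assumes \<gamma>: "\<gamma> = 1" and T: "0 < T"
  shows "eventually (\<lambda>n. \<forall>t\<in>{0..T}. \<bar>(\<Sum>j\<in>{n..<n + nat \<lfloor>real n powr \<gamma> * t\<rfloor>}. real j powr -\<gamma>) - ln (1 + t)\<bar>
            \<le> 2 / real n) sequentially"
  using eventually_ge_at_top[of "1::nat"]
proof eventually_elim
  case (elim n)
  have n1: "1 \<le> real n" using elim by simp
  show ?case
  proof
    fix t assume t: "t \<in> {0..T}"
    define m where "m = nat \<lfloor>real n * t\<rfloor>"
    have y0: "0 \<le> real n * t" using t by simp
    have m1: "real m \<le> real n * t" using y0 by (simp add: m_def)
    have m2: "real n * t < real m + 1" using y0 by (simp add: m_def)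
    have sm: "(\<Sum>j\<in>{n..<n + nat \<lfloor>real n powr \<gamma> * t\<rfloor>}. real j powr -\<gamma>) = (\<Sum>j\<in>{n..<n+m}. 1 / real j)"
      unfolding \<gamma> m_def using n1
      by (intro sum.cong) (auto simp: powr_minus_divide powr_one)
    have H: "\<bar>(\<Sum>j\<in>{n..<n+m}. 1 / real j) - (ln (real (n+m)) - ln (real n))\<bar> \<le> 1 / real n"
    proof -
      have "0 \<le> 1 / real (n+m)" by simp
      thus ?thesis using harm[of n m] elim unfolding abs_le_iff by linarith
    qed
    have L: "ln (real (n+m)) - ln (real n) = ln (1 + real m / real n)"
    proof -
      have "ln (real (n+m)) - ln (real n) = ln (real (n+m) / real n)" using n1 by (simp add: ln_div)
      also have "real (n+m) / real n = 1 + real m / real n" using n1 by (simp add: field_simps)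
      finally show ?thesis .
    qed
    have "\<bar>ln (1 + real m / real n) - ln (1 + t)\<bar> \<le> \<bar>(1 + real m / real n) - (1 + t)\<bar>"
      by (rule ln_lip) (use t n1 in auto)
    also have "\<dots> = \<bar>real m - real n * t\<bar> / real n" using n1
      by (simp add: field_simps abs_div)
    also have "\<dots> \<le> 1 / real n" using m1 m2 n1 by (intro divide_right_mono) auto
    finally have L2: "\<bar>ln (1 + real m / real n) - ln (1 + t)\<bar> \<le> 1 / real n" .
    show "\<bar>(\<Sum>j\<in>{n..<n + nat \<lfloor>real n powr \<gamma> * t\<rfloor>}. real j powr -\<gamma>) - ln (1 + t)\<bar> \<le> 2 / real n"
      unfolding sm using H L L2 by linarith
  qed
qed

lemma assembly:
  fixes \<alpha> \<gamma> c :: real and r :: "nat \<Rightarrow> real" and l :: "nat \<Rightarrow> real" and k :: "nat \<Rightarrow> real \<Rightarrow> nat"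
    and h :: "real \<Rightarrow> real" and K :: "real set"
  assumes \<alpha>: "0 < \<alpha>" "\<alpha> \<le> 1" and \<gamma>: "0 < \<gamma>" and c: "0 < c"
    and r0: "\<And>n. 0 \<le> r n" and r1: "\<And>n. r n < 1"
    and lim: "(\<lambda>n. real n powr \<gamma> * r n) \<longlonglongrightarrow> c"
    and l_def: "\<And>n. l n = (\<Prod>j<n. 1 / (1 - \<alpha> * r j))"
    and k_def: "\<And>n t. k n t = nat \<lfloor>real n + real n powr \<gamma> * t\<rfloor>"
    and HH: "\<And>T. 0 < T \<Longrightarrow> \<exists>\<beta>. \<beta> \<longlonglongrightarrow> 0 \<and> eventually (\<lambda>n. \<forall>t\<in>{0..T}. \<bar>(\<Sum>j\<in>{n..<n + nat \<lfloor>real n powr \<gamma> * t\<rfloor>}. real j powr -\<gamma>) - h t\<bar> \<le> \<beta> n) sequentially"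
    and hle: "\<And>t. 0 \<le> t \<Longrightarrow> h t \<le> t"
    and K: "compact K" "K \<subseteq> {0..}"
  shows "uniform_limit K (\<lambda>n t. l (k n t) / l n) (\<lambda>t. exp (\<alpha>*c*h t)) sequentially"
proof -
  obtain a where a: "\<forall>x\<in>K. norm x \<le> a" using compact_imp_bounded[OF K(1)] by (auto simp: bounded_iff)
  define T where "T = max 1 a"
  have T: "0 < T" by (simp add: T_def)
  have KT: "K \<subseteq> {0..T}" using a K(2) by (force simp: T_def)
  obtain \<beta> where \<beta>: "\<beta> \<longlonglongrightarrow> 0" and hh: "eventually (\<lambda>n. \<forall>t\<in>{0..T}. \<bar>(\<Sum>j\<in>{n..<n + nat \<lfloor>real n powr \<gamma> * t\<rfloor>}. real j powr -\<gamma>) - h t\<bar> \<le> \<beta> n) sequentially"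
    using HH[OF T] by blast
  have U: "uniform_limit {0..T} (\<lambda>n t. \<Sum>j\<in>{n..<n + nat \<lfloor>real n powr \<gamma> * t\<rfloor>}. - ln (1 - \<alpha> * r j)) (\<lambda>t. \<alpha>*c*h t) sequentially"
    by (rule core[OF \<alpha>(1) \<gamma> c r0 lim T \<beta> hh])
  have U2: "uniform_limit {0..T} (\<lambda>n t. exp (\<Sum>j\<in>{n..<n + nat \<lfloor>real n powr \<gamma> * t\<rfloor>}. - ln (1 - \<alpha> * r j))) (\<lambda>t. exp (\<alpha>*c*h t)) sequentially"
  proof (rule ulim_exp[OF U])
    fix t assume t: "t \<in> {0..T}"
    have "\<alpha>*c*h t \<le> \<alpha>*c*T" using hle[of t] t \<alpha> c by (intro mult_left_mono) auto
    thus "\<alpha>*c*h t \<le> \<alpha>*c*T" .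
  qed
  have pos: "0 < 1 - \<alpha> * r j" for j
  proof -
    have "\<alpha> * r j \<le> 1 * r j" using \<alpha> r0[of j] by (intro mult_right_mono) auto
    thus ?thesis using r1[of j] by simp
  qed
  have eq: "l (k n t) / l n = exp (\<Sum>j\<in>{n..<n + nat \<lfloor>real n powr \<gamma> * t\<rfloor>}. - ln (1 - \<alpha> * r j))"
    if t: "t \<in> {0..T}" for n t
  proof -
    define m where "m = nat \<lfloor>real n powr \<gamma> * t\<rfloor>"
    have y0: "0 \<le> real n powr \<gamma> * t" using t by simp
    have km: "k n t = n + m" unfolding k_def m_def
    proof -
      have "\<lfloor>real n + real n powr \<gamma> * t\<rfloor> = int n + \<lfloor>real n powr \<gamma> * t\<rfloor>"
        by (metis add.commute floor_add_int of_int_of_nat_eq)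
      moreover have "0 \<le> \<lfloor>real n powr \<gamma> * t\<rfloor>" using y0 by simp
      ultimately show "nat \<lfloor>real n + real n powr \<gamma> * t\<rfloor> = n + nat \<lfloor>real n powr \<gamma> * t\<rfloor>" by (simp add: nat_add_distrib)
    qed
    have split: "{..<n+m} = {..<n} \<union> {n..<n+m}" by auto
    have "l (n+m) = l n * (\<Prod>j\<in>{n..<n+m}. 1 / (1 - \<alpha> * r j))"
      unfolding l_def split by (subst prod.union_disjoint) auto
    moreover have "0 < l n" unfolding l_def using pos by (intro prod_pos) auto
    ultimately have "l (n+m) / l n = (\<Prod>j\<in>{n..<n+m}. 1 / (1 - \<alpha> * r j))" by simp
    also have "\<dots> = (\<Prod>j\<in>{n..<n+m}. exp (- ln (1 - \<alpha> * r j)))"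
      using pos by (intro prod.cong) (auto simp: exp_minus inverse_eq_divide)
    also have "\<dots> = exp (\<Sum>j\<in>{n..<n+m}. - ln (1 - \<alpha> * r j))" by (simp add: exp_sum)
    finally show ?thesis using km m_def by simp
  qed
  have "uniform_limit {0..T} (\<lambda>n t. l (k n t) / l n) (\<lambda>t. exp (\<alpha>*c*h t)) sequentially"
    using U2 by (subst uniform_limit_cong'[OF eq]) auto
  thus ?thesis using KT by (rule uniform_limit_on_subset)
qed

theorem lemma6p1:
  fixes \<alpha> \<gamma> c :: real and r :: "nat \<Rightarrow> real"
    and l :: "nat \<Rightarrow> real" and k :: "nat \<Rightarrow> real \<Rightarrow> nat"
  assumes "0 < \<alpha>" "\<alpha> \<le> 1" "1/2 < \<gamma>" "\<gamma> \<le> 1" "0 < c"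
    and "\<And>n. 0 \<le> r n" "\<And>n. r n < 1"
    and "(\<lambda>n. real n powr \<gamma> * r n) \<longlonglongrightarrow> c"
    and l_def: "\<And>n. l n = (\<Prod>j<n. 1 / (1 - \<alpha> * r j))"
    and k_def: "\<And>n t. k n t = nat \<lfloor>real n + real n powr \<gamma> * t\<rfloor>"
  shows "(\<gamma> < 1 \<longrightarrow> (\<forall>K. compact K \<and> K \<subseteq> {0..} \<longrightarrow>
            uniform_limit K (\<lambda>n t. l (k n t) / l n) (\<lambda>t. exp (c * \<alpha> * t)) sequentially))
       \<and> (\<gamma> = 1 \<and> 2 * c * \<alpha> > 1 \<longrightarrow> (\<forall>K. compact K \<and> K \<subseteq> {0..} \<longrightarrow>
            uniform_limit K (\<lambda>n t. l (k n t) / l n) (\<lambda>t. (1 + t) powr (c * \<alpha>)) sequentially))"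
proof (intro conjI impI allI)
  have \<gamma>0: "0 < \<gamma>" using assms(3) by simp
  fix K :: "real set"
  {
    assume g1: "\<gamma> < 1" and K: "compact K \<and> K \<subseteq> {0..}"
    have HH: "\<exists>\<beta>. \<beta> \<longlonglongrightarrow> 0 \<and> eventually (\<lambda>n. \<forall>t\<in>{0..T}. \<bar>(\<Sum>j\<in>{n..<n + nat \<lfloor>real n powr \<gamma> * t\<rfloor>}. real j powr -\<gamma>) - t\<bar> \<le> \<beta> n) sequentially"
      if T: "0 < T" for T
    proof (intro exI conjI)
      show "eventually (\<lambda>n. \<forall>t\<in>{0..T}. \<bar>(\<Sum>j\<in>{n..<n + nat \<lfloor>real n powr \<gamma> * t\<rfloor>}. real j powr -\<gamma>) - t\<bar>
            \<le> T^2 * real n powr (\<gamma> - 1) + real n powr -\<gamma>) sequentially"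
        by (rule hh_lt1[OF \<gamma>0 assms(4) T])
      have a: "(\<lambda>n. real n powr (\<gamma> - 1)) \<longlonglongrightarrow> 0"
        by (rule tendsto_neg_powr) (use g1 filterlim_real_sequentially in auto)
      have b: "(\<lambda>n. real n powr -\<gamma>) \<longlonglongrightarrow> 0"
        by (rule tendsto_neg_powr) (use \<gamma>0 filterlim_real_sequentially in auto)
      show "(\<lambda>n. T^2 * real n powr (\<gamma> - 1) + real n powr -\<gamma>) \<longlonglongrightarrow> 0"
        using tendsto_add[OF tendsto_mult[OF tendsto_const a] b] by simp
    qed
    have "uniform_limit K (\<lambda>n t. l (k n t) / l n) (\<lambda>t. exp (\<alpha>*c*t)) sequentially"
      by (rule assembly[OF assms(1,2) \<gamma>0 assms(5,6,7,8) l_def k_def HH]) (use K in auto)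
    thus "uniform_limit K (\<lambda>n t. l (k n t) / l n) (\<lambda>t. exp (c * \<alpha> * t)) sequentially"
      by (simp add: mult.commute mult.left_commute)
  }
  {
    assume g1: "\<gamma> = 1 \<and> 2 * c * \<alpha> > 1" and K: "compact K \<and> K \<subseteq> {0..}"
    have HH: "\<exists>\<beta>. \<beta> \<longlonglongrightarrow> 0 \<and> eventually (\<lambda>n. \<forall>t\<in>{0..T}. \<bar>(\<Sum>j\<in>{n..<n + nat \<lfloor>real n powr \<gamma> * t\<rfloor>}. real j powr -\<gamma>) - ln (1 + t)\<bar> \<le> \<beta> n) sequentially"
      if T: "0 < T" for T
    proof (intro exI conjI)
      show "eventually (\<lambda>n. \<forall>t\<in>{0..T}. \<bar>(\<Sum>j\<in>{n..<n + nat \<lfloor>real n powr \<gamma> * t\<rfloor>}. real j powr -\<gamma>) - ln (1 + t)\<bar>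
            \<le> 2 / real n) sequentially"
        by (rule hh_eq1) (use g1 T in auto)
      show "(\<lambda>n. 2 / real n) \<longlonglongrightarrow> 0"
        using tendsto_mult[OF tendsto_const lim_inverse_n'] by (simp add: divide_inverse)
    qed
    have "uniform_limit K (\<lambda>n t. l (k n t) / l n) (\<lambda>t. exp (\<alpha>*c*ln (1 + t))) sequentially"
      by (rule assembly[OF assms(1,2) \<gamma>0 assms(5,6,7,8) l_def k_def HH]) (use K in \<open>auto intro: ln_add_one_self_le_self\<close>)
    moreover have "exp (\<alpha>*c*ln (1 + t)) = (1 + t) powr (c * \<alpha>)" if "t \<in> K" for t
      using that K by (auto simp: powr_def mult.commute)
    ultimately show "uniform_limit K (\<lambda>n t. l (k n t) / l n) (\<lambda>t. (1 + t) powr (c * \<alpha>)) sequentially"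
      by (subst (asm) uniform_limit_cong') auto
  }
qed

end
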